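(* Let $N_{\mathrm{PA}}<N$ and let $f:\mathrm{GF}(2)^N\to\mathrm{GF}(2)^{N_{\mathrm{PA}}}$ be an additive map (i.e. $f(\vec a)=A\vec a$ for an $N_{\mathrm{PA}}\times N$ matrix $A$ over $\mathrm{GF}(2)$) whose matrix $A$ has linearly independent rows, so that $f$ is surjective. Let $\vec a$ be a random $N$-bit string and $E$ a quantum system held by an eavesdropper, with joint classical-quantum state $\rho_{\vec a E}$, and suppose the key $K=f(\vec a)$ is $\epsilon$-secure with respect to $E$, i.e. $\frac12\operatorname{Tr}|\rho_{KE}-\rho_U\otimes\rho_E|\le\epsilon$ where $\rho_U$ is the uniform distribution on $\{0,1\}^{N_{\mathrm{PA}}}$. Let $\vec m'$ be an $N_{\mathrm{PA}}$-bit message, distributed arbitrarily but independently of $(\vec a,E)$, and let $\vec m$ be chosen, given $\vec m'$, uniformly at random (with fresh randomness independent of everything else) from the set $f^{-1}[\vec m']=\{\vec m\in\mathrm{GF}(2)^N: f(\vec m)=\vec m'\}$. Let $S=\vec a\oplus\vec m$ be the string observed by the eavesdropper. Then the message $\vec m'$ is $\epsilon$-secure against an eavesdropper holding $E$ and $S$, in the sense that $$\tfrac12\operatorname{Tr}\big|\rho_{M'SE}-\rho_{M'}\otimes\tau_N\otimes\rho_E\big|\le\epsilon,$$ where $\rho_{M'SE}$ is the joint classical-quantum state of $\vec m'$, $S$ and $E$, $\rho_{M'}$ is the state of $\vec m'$, and $\tau_N$ is the uniform distribution on $\{0,1\}^N$. (This is exactly the security level obtained when, instead, $\vec m'$ is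 one-time-pad encrypted with the key $f(\vec a)$ and the eavesdropper sees $f(\vec a)\oplus\vec m'$.) *)

theory Defs
  imports "Jordan_Normal_Form.Schur_Decomposition" "Jordan_Normal_Form.Char_Poly" "HOL-Library.Z2"
begin

text \<open>Classical bit strings of length n are vectors in carrier_vec n over the field GF(2)
  (type bit); addition of such vectors is bitwise XOR.\<close>

definition mtrace :: "complex mat \<Rightarrow> complex" where
  "mtrace A = (\<Sum>i<dim_row A. A $$ (i,i))"

definition psd :: "nat \<Rightarrow> complex mat \<Rightarrow> bool" where
  "psd d A \<longleftrightarrow> A \<in> carrier_mat d d \<and> mat_adjoint A = A \<and>
     (\<forall>v \<in> carrier_vec d. 0 \<le> Re (scalar_prod (conjugate v) (A *\<^sub>v v)))"

text \<open>Trace norm Tr|X| of a Hermitian matrix X: the sum of the absolute values of its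
  eigenvalues, counted with (algebraic) multiplicity.\<close>
definition trace_norm :: "complex mat \<Rightarrow> real" where
  "trace_norm X = (\<Sum>z\<in>{z. poly (char_poly X) z = 0}. real (order z (char_poly X)) * cmod z)"

definition msum :: "nat \<Rightarrow> ('x \<Rightarrow> complex mat) \<Rightarrow> 'x set \<Rightarrow> complex mat" where
  "msum d f S = mat d d (\<lambda>ij. \<Sum>x\<in>S. f x $$ ij)"

text \<open>A classical-quantum state on classical alphabet X and quantum dimension d,
  rho_XE = sum_x |x><x| (tensor) rho x, is represented by its block family x \<mapsto> rho x
  (subnormalised: rho x = Pr[x] * rho_E^x).\<close>
definition cq_state :: "nat \<Rightarrow> 'x set \<Rightarrow> ('x \<Rightarrow> complex mat) \<Rightarrow> bool" where
  "cq_state d X \<rho> \<longleftrightarrow> (\<forall>x\<in>X. psd d (\<rho> x)) \<and> (\<Sum>x\<in>X. mtrace (\<rho> x)) = 1"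

text \<open>(1/2) Tr |rho_XE - sigma_XE| for two cq states with the same classical register X
  (the difference is block diagonal, so the trace norm is the sum of the blocks' trace norms).\<close>
definition cq_trace_dist :: "'x set \<Rightarrow> ('x \<Rightarrow> complex mat) \<Rightarrow> ('x \<Rightarrow> complex mat) \<Rightarrow> real" where
  "cq_trace_dist X \<rho> \<sigma> = (1/2) * (\<Sum>x\<in>X. trace_norm (\<rho> x - \<sigma> x))"

definition marg_E :: "nat \<Rightarrow> 'x set \<Rightarrow> ('x \<Rightarrow> complex mat) \<Rightarrow> complex mat" where
  "marg_E d X \<rho> = msum d \<rho> X"

definition fiber :: "nat \<Rightarrow> bit mat \<Rightarrow> bit vec \<Rightarrow> bit vec set" where
  "fiber N A k = {a \<in> carrier_vec N. A *\<^sub>v a = k}"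

definition key_state :: "nat \<Rightarrow> nat \<Rightarrow> bit mat \<Rightarrow> (bit vec \<Rightarrow> complex mat) \<Rightarrow> bit vec \<Rightarrow> complex mat" where
  "key_state d N A \<rho> k = msum d \<rho> (fiber N A k)"

text \<open>State rho_{M'SE}: m' ~ p, m uniform on f^{-1}[m'] (fresh randomness), S = a + m,
  hence a = S + m over GF(2).\<close>
definition msg_state :: "nat \<Rightarrow> nat \<Rightarrow> bit mat \<Rightarrow> (bit vec \<Rightarrow> real) \<Rightarrow> (bit vec \<Rightarrow> complex mat)
    \<Rightarrow> bit vec \<times> bit vec \<Rightarrow> complex mat" where
  "msg_state d N A p \<rho> ms = (case ms of (m', s) \<Rightarrow>
     msum d (\<lambda>m. complex_of_real (p m' / real (card (fiber N A m'))) \<cdot>\<^sub>m \<rho> (s + m)) (fiber N A m'))"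

end

theory Submission
  imports Defs "Jordan_Normal_Form.Jordan_Normal_Form_Existence"
begin


lemma bit_cases2: "(x::bit) = 0 \<or> x = 1" by (cases "x = 0") auto

lemma bit_UNIV: "(UNIV :: bit set) = {0, 1}" using bit_cases2 by auto

lemma bit_add_self[simp]: "(x::bit) + x = 0"
  using bit_cases2[of x] by auto

definition chi :: "bit \<Rightarrow> real" where "chi b = (if b = 0 then 1 else -1)"

lemma chi_add: "chi (x + y) = chi x * chi y"
  using bit_cases2[of x] bit_cases2[of y] by (auto simp: chi_def)

lemma chi_0[simp]: "chi 0 = 1" by (simp add: chi_def)
lemma chi_1[simp]: "chi 1 = -1" by (simp add: chi_def)

lemma vec_add_self: "(a :: bit vec) \<in> carrier_vec n \<Longrightarrow> a + a = 0\<^sub>v n"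
  by (intro eq_vecI) auto

lemma carrier_vec_image: "carrier_vec n = (\<lambda>f. vec n f) ` (PiE {..<n} (\<lambda>_. (UNIV :: 'a set)))"
proof (intro equalityI subsetI)
  fix v :: "'a vec" assume v: "v \<in> carrier_vec n"
  show "v \<in> (\<lambda>f. vec n f) ` (PiE {..<n} (\<lambda>_. UNIV))"
  proof
    show "v = vec n (restrict (\<lambda>i. v $ i) {..<n})" using v by (intro eq_vecI) auto
  qed auto
qed auto

lemma inj_vec_PiE: "inj_on (\<lambda>f. vec n f) (PiE {..<n} (\<lambda>_. (UNIV :: 'a set)))"
proof (rule inj_onI)
  fix f g assume f: "f \<in> PiE {..<n} (\<lambda>_. (UNIV :: 'a set))" and g: "g \<in> PiE {..<n} (\<lambda>_. (UNIV :: 'a set))"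
    and e: "vec n f = vec n g"
  have fe: "f \<in> extensional {..<n}" "g \<in> extensional {..<n}" using f g by (auto simp: PiE_iff)
  show "f = g"
  proof (rule extensionalityI[OF fe])
    fix i assume "i \<in> {..<n}"
    then show "f i = g i" using arg_cong[OF e, of "\<lambda>v. v $ i"] by auto
  qed
qed

lemma card_bit_vecs: "card (carrier_vec n :: bit vec set) = 2 ^ n"
  unfolding carrier_vec_image card_image[OF inj_vec_PiE] card_PiE[OF finite_lessThan]
  by (simp add: bit_UNIV numeral_2_eq_2)

lemma finite_bit_vecs[simp]: "finite (carrier_vec n :: bit vec set)"
  unfolding carrier_vec_image by (intro finite_imageI finite_PiE) (auto simp: bit_UNIV)

lemma char_sum:
  assumes w: "(w :: bit vec) \<in> carrier_vec n"
  shows "(\<Sum>a\<in>carrier_vec n. chi (w \<bullet> a)) = (if w = 0\<^sub>v n then 2 ^ n else 0)"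
proof (cases "w = 0\<^sub>v n")
  case True
  have "\<forall>a\<in>carrier_vec n. chi (w \<bullet> a) = 1" using True by (simp add: scalar_prod_left_zero)
  then show ?thesis using True card_bit_vecs[of n] by simp
next
  case False
  then obtain i where i: "i < n" "w $ i \<noteq> 0" using w by (metis eq_vecI carrier_vecD index_zero_vec)
  then have wi: "w $ i = 1" by simp
  define e :: "bit vec" where "e = unit_vec n i"
  have e: "e \<in> carrier_vec n" unfolding e_def by simp
  define g where "g = (\<lambda>a. a + e)"
  have bij: "bij_betw g (carrier_vec n) (carrier_vec n)"
  proof (rule bij_betwI[of _ _ _ g])
    show "g \<in> carrier_vec n \<rightarrow> carrier_vec n" using e unfolding g_def by auto
    show "g \<in> carrier_vec n \<rightarrow> carrier_vec n" using e unfolding g_def by auto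
    fix x :: "bit vec" assume x: "x \<in> carrier_vec n"
    show "g (g x) = x" unfolding g_def using x e
      by (simp add: assoc_add_vec vec_add_self)
    show "g (g x) = x" unfolding g_def using x e
      by (simp add: assoc_add_vec vec_add_self)
  qed
  have we: "w \<bullet> e = 1" unfolding e_def using w i wi by (simp add: scalar_prod_right_unit)
  have "(\<Sum>a\<in>carrier_vec n. chi (w \<bullet> a)) = (\<Sum>a\<in>carrier_vec n. chi (w \<bullet> g a))"
    using sum.reindex_bij_betw[OF bij, of "\<lambda>a. chi (w \<bullet> a)"] by simp
  also have "\<dots> = (\<Sum>a\<in>carrier_vec n. - chi (w \<bullet> a))"
    by (intro sum.cong refl) (simp add: g_def scalar_prod_add_distrib[OF w _ e] we chi_add)
  finally have "(\<Sum>a\<in>carrier_vec n. chi (w \<bullet> a)) = 0" by (simp add: sum_negf)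
  then show ?thesis using False by simp
qed



lemma char_poly_nz: "(X::complex mat) \<in> carrier_mat d d \<Longrightarrow> char_poly X \<noteq> 0"
  using degree_monic_char_poly[of X d] by auto

lemma trace_norm_zero: "trace_norm (0\<^sub>m d d) = 0"
proof -
  have "\<forall>z\<in>{z. poly (char_poly (0\<^sub>m d d :: complex mat)) z = 0}. real (order z (char_poly (0\<^sub>m d d))) * cmod z = 0"
  proof
    fix z assume "z \<in> {z. poly (char_poly (0\<^sub>m d d :: complex mat)) z = 0}"
    then have "eigenvalue (0\<^sub>m d d :: complex mat) z"
      using eigenvalue_root_char_poly[of "0\<^sub>m d d :: complex mat" d z] by auto
    then obtain v where v: "v \<in> carrier_vec d" "v \<noteq> 0\<^sub>v d" "0\<^sub>m d d *\<^sub>v v = z \<cdot>\<^sub>v v"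
      unfolding eigenvalue_def eigenvector_def by auto
    have "z = 0"
    proof (rule ccontr)
      assume z: "z \<noteq> 0"
      have "v = 0\<^sub>v d"
      proof (rule eq_vecI)
        fix i assume i: "i < dim_vec (0\<^sub>v d :: complex vec)"
        have "(0\<^sub>m d d *\<^sub>v v) $ i = (z \<cdot>\<^sub>v v) $ i" using v(3) by simp
        then show "v $ i = 0\<^sub>v d $ i" using i v(1) z by auto
      qed (use v in auto)
      then show False using v(2) by simp
    qed
    then show "real (order z (char_poly (0\<^sub>m d d))) * cmod z = 0" by simp
  qed
  then show ?thesis unfolding trace_norm_def by (intro sum.neutral) blast
qed

lemma trace_norm_smult:
  assumes X: "X \<in> carrier_mat d d" and c: "c \<ge> 0"
  shows "trace_norm (complex_of_real c \<cdot>\<^sub>m X) = c * trace_norm X"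
proof (cases "c = 0")
  case True
  have "complex_of_real c \<cdot>\<^sub>m X = 0\<^sub>m d d" using X True by (intro eq_matI) auto
  then show ?thesis using True trace_norm_zero by simp
next
  case False
  define k where "k = complex_of_real c"
  have k: "k \<noteq> 0" using False k_def by simp
  have ck: "cmod k = c" using c k_def by simp
  have kX: "k \<cdot>\<^sub>m X \<in> carrier_mat d d" using X by simp
  have ord: "\<And>z. order z (char_poly (k \<cdot>\<^sub>m X)) = order (z / k) (char_poly X)"
    by (rule order_char_poly_smult[OF X k])
  have set: "{z. poly (char_poly (k \<cdot>\<^sub>m X)) z = 0} = (\<lambda>w. k * w) ` {w. poly (char_poly X) w = 0}"
  proof -
    have "{z. poly (char_poly (k \<cdot>\<^sub>m X)) z = 0} = {z. order (z / k) (char_poly X) \<noteq> 0}"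
      unfolding order_root[of "char_poly (k \<cdot>\<^sub>m X)"] ord using char_poly_nz[OF kX] by simp
    also have "\<dots> = (\<lambda>w. k * w) ` {w. order w (char_poly X) \<noteq> 0}"
    proof (intro equalityI subsetI)
      fix z assume "z \<in> {z. order (z / k) (char_poly X) \<noteq> 0}"
      then show "z \<in> (\<lambda>w. k * w) ` {w. order w (char_poly X) \<noteq> 0}"
        using k by (intro image_eqI[of _ _ "z / k"]) auto
    qed (use k in auto)
    also have "{w. order w (char_poly X) \<noteq> 0} = {w. poly (char_poly X) w = 0}"
      using order_root char_poly_nz[OF X] by auto
    finally show ?thesis .
  qed
  have inj: "inj_on (\<lambda>w. k * w) {w. poly (char_poly X) w = 0}" using k by (auto intro: inj_onI)
  have "trace_norm (k \<cdot>\<^sub>m X) = (\<Sum>w\<in>{w. poly (char_poly X) w = 0}.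
      real (order (k * w) (char_poly (k \<cdot>\<^sub>m X))) * cmod (k * w))"
    unfolding trace_norm_def set sum.reindex[OF inj] by simp
  also have "\<dots> = (\<Sum>w\<in>{w. poly (char_poly X) w = 0}. c * (real (order w (char_poly X)) * cmod w))"
    by (intro sum.cong refl) (simp add: ord k norm_mult ck)
  also have "\<dots> = c * trace_norm X" unfolding trace_norm_def by (simp add: sum_distrib_left)
  finally show ?thesis unfolding k_def .
qed



lemma indicator_sum:
  assumes z: "(z :: bit vec) \<in> carrier_vec n"
  shows "(\<Sum>y\<in>carrier_vec n. chi (y \<bullet> z)) = (if z = 0\<^sub>v n then 2 ^ n else 0)"
proof -
  have "(\<Sum>y\<in>carrier_vec n. chi (y \<bullet> z)) = (\<Sum>y\<in>carrier_vec n. chi (z \<bullet> y))"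
    by (intro sum.cong refl) (simp add: comm_scalar_prod[OF _ z])
  then show ?thesis using char_sum[OF z] by simp
qed

lemma fiber_card:
  assumes A: "A \<in> carrier_mat P N"
    and inj: "\<forall>y \<in> carrier_vec P. transpose_mat A *\<^sub>v y = 0\<^sub>v N \<longrightarrow> y = 0\<^sub>v P"
    and k: "k \<in> carrier_vec P"
  shows "real (card (fiber N A k)) * 2 ^ P = 2 ^ N"
proof -
  have iff: "A *\<^sub>v a + k = 0\<^sub>v P \<longleftrightarrow> A *\<^sub>v a = k" if a: "a \<in> carrier_vec N" for a :: "bit vec"
  proof
    have Aa: "A *\<^sub>v a \<in> carrier_vec P" using A a by simp
    assume h: "A *\<^sub>v a + k = 0\<^sub>v P"
    have "A *\<^sub>v a = (A *\<^sub>v a + k) + k" using Aa k by (simp add: assoc_add_vec vec_add_self)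
    then show "A *\<^sub>v a = k" using h k by simp
  next
    assume "A *\<^sub>v a = k" then show "A *\<^sub>v a + k = 0\<^sub>v P" using k by (simp add: vec_add_self)
  qed
  have "real (card (fiber N A k)) * 2 ^ P = (\<Sum>a\<in>(carrier_vec N :: bit vec set). if A *\<^sub>v a = k then 2 ^ P else 0)"
    unfolding fiber_def by (simp add: sum.If_cases Int_def)
  also have "\<dots> = (\<Sum>a\<in>(carrier_vec N :: bit vec set). \<Sum>y\<in>(carrier_vec P :: bit vec set). chi (y \<bullet> (A *\<^sub>v a + k)))"
  proof (intro sum.cong refl)
    fix a :: "bit vec" assume a: "a \<in> carrier_vec N"
    have "A *\<^sub>v a + k \<in> carrier_vec P" using A a k by simp
    then show "(if A *\<^sub>v a = k then 2 ^ P else 0) = (\<Sum>y\<in>(carrier_vec P :: bit vec set). chi (y \<bullet> (A *\<^sub>v a + k)))"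
      using indicator_sum iff[OF a] by simp
  qed
  also have "\<dots> = (\<Sum>a\<in>(carrier_vec N :: bit vec set). \<Sum>y\<in>(carrier_vec P :: bit vec set). chi (y \<bullet> k) * chi ((transpose_mat A *\<^sub>v y) \<bullet> a))"
  proof (intro sum.cong refl)
    fix a y :: "bit vec" assume a: "a \<in> carrier_vec N" and y: "y \<in> carrier_vec P"
    have Aa: "A *\<^sub>v a \<in> carrier_vec P" using A a by simp
    show "chi (y \<bullet> (A *\<^sub>v a + k)) = chi (y \<bullet> k) * chi ((transpose_mat A *\<^sub>v y) \<bullet> a)"
      unfolding scalar_prod_add_distrib[OF y Aa k] chi_add transpose_vec_mult_scalar[OF A a y]
      by (rule mult.commute)
  qed
  also have "\<dots> = (\<Sum>y\<in>(carrier_vec P :: bit vec set). chi (y \<bullet> k) * (\<Sum>a\<in>(carrier_vec N :: bit vec set). chi ((transpose_mat A *\<^sub>v y) \<bullet> a)))"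
    by (subst sum.swap) (simp add: sum_distrib_left)
  also have "\<dots> = (\<Sum>y\<in>(carrier_vec P :: bit vec set). if y = 0\<^sub>v P then 2 ^ N else 0)"
  proof (intro sum.cong refl)
    fix y :: "bit vec" assume y: "y \<in> carrier_vec P"
    have Ty: "transpose_mat A *\<^sub>v y \<in> carrier_vec N" using A y by simp
    have e: "transpose_mat A *\<^sub>v y = 0\<^sub>v N \<longleftrightarrow> y = 0\<^sub>v P"
    proof
      assume "y = 0\<^sub>v P" then show "transpose_mat A *\<^sub>v y = 0\<^sub>v N" using A by (intro eq_vecI) auto
    qed (use inj y in auto)
    show "chi (y \<bullet> k) * (\<Sum>a\<in>(carrier_vec N :: bit vec set). chi ((transpose_mat A *\<^sub>v y) \<bullet> a)) = (if y = 0\<^sub>v P then 2 ^ N else 0)"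
      unfolding char_sum[OF Ty] e using k by (simp add: scalar_prod_left_zero)
  qed
  also have "\<dots> = 2 ^ N" by (simp add: sum.delta)
  finally show ?thesis .
qed



lemma msum_carrier[simp]: "msum d f S \<in> carrier_mat d d" unfolding msum_def by simp

lemma msum_smult:
  assumes "\<And>x. x \<in> S \<Longrightarrow> f x \<in> carrier_mat d d"
  shows "msum d (\<lambda>x. c \<cdot>\<^sub>m f x) S = c \<cdot>\<^sub>m msum d f S"
proof -
  have h: "\<And>x i j. x \<in> S \<Longrightarrow> i < d \<Longrightarrow> j < d \<Longrightarrow> (c \<cdot>\<^sub>m f x) $$ (i,j) = c * f x $$ (i,j)"
    using assms by (metis carrier_matD(1) carrier_matD(2) index_smult_mat(1))
  show ?thesis unfolding msum_def by (intro eq_matI) (auto simp: sum_distrib_left h intro!: sum.cong)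
qed

lemma smult_diff_factor:
  assumes "X \<in> carrier_mat d d" "Y \<in> carrier_mat d d"
  shows "(c::complex) \<cdot>\<^sub>m X - (c * b) \<cdot>\<^sub>m Y = c \<cdot>\<^sub>m (X - b \<cdot>\<^sub>m Y)"
  using assms by (intro eq_matI) (auto simp: algebra_simps)

lemma msg_state_eq:
  assumes A: "A \<in> carrier_mat P N"
    and rho: "\<And>x. x \<in> carrier_vec N \<Longrightarrow> \<rho> x \<in> carrier_mat d d"
    and m': "m' \<in> carrier_vec P" and s: "s \<in> carrier_vec N"
  shows "msg_state d N A p \<rho> (m', s) =
     complex_of_real (p m' / real (card (fiber N A m'))) \<cdot>\<^sub>m key_state d N A \<rho> (A *\<^sub>v s + m')"
proof -
  let ?c = "complex_of_real (p m' / real (card (fiber N A m')))"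
  have sm: "s + m \<in> carrier_vec N" if "m \<in> fiber N A m'" for m using that s unfolding fiber_def by auto
  have "msg_state d N A p \<rho> (m', s) = ?c \<cdot>\<^sub>m msum d (\<lambda>m. \<rho> (s + m)) (fiber N A m')"
    unfolding msg_state_def using rho sm by (simp add: msum_smult)
  also have "msum d (\<lambda>m. \<rho> (s + m)) (fiber N A m') = msum d \<rho> (fiber N A (A *\<^sub>v s + m'))"
  proof -
    have bij: "bij_betw (\<lambda>m. s + m) (fiber N A m') (fiber N A (A *\<^sub>v s + m'))"
    proof (rule bij_betwI[of _ _ _ "\<lambda>m. s + m"])
      have As: "A *\<^sub>v s \<in> carrier_vec P" using A s by simp
      show "(\<lambda>m. s + m) \<in> fiber N A m' \<rightarrow> fiber N A (A *\<^sub>v s + m')"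
        unfolding fiber_def using A s by (auto simp: mult_add_distrib_mat_vec)
      show "(\<lambda>m. s + m) \<in> fiber N A (A *\<^sub>v s + m') \<rightarrow> fiber N A m'"
      proof
        fix a assume a: "a \<in> fiber N A (A *\<^sub>v s + m')"
        then have aN: "a \<in> carrier_vec N" and Aa: "A *\<^sub>v a = A *\<^sub>v s + m'" unfolding fiber_def by auto
        have "A *\<^sub>v (s + a) = A *\<^sub>v s + (A *\<^sub>v s + m')" using A s aN Aa by (simp add: mult_add_distrib_mat_vec)
        also have "\<dots> = m'" using As m' by (simp add: assoc_add_vec[symmetric] vec_add_self)
        finally show "s + a \<in> fiber N A m'" unfolding fiber_def using s aN by simp
      qed
      fix x assume "x \<in> fiber N A m'"
      then have "x \<in> carrier_vec N" unfolding fiber_def by auto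
      then show "s + (s + x) = x" using s by (simp add: assoc_add_vec[symmetric] vec_add_self)
    next
      fix y assume "y \<in> fiber N A (A *\<^sub>v s + m')"
      then have "y \<in> carrier_vec N" unfolding fiber_def by auto
      then show "s + (s + y) = y" using s by (simp add: assoc_add_vec[symmetric] vec_add_self)
    qed
    show ?thesis unfolding msum_def
      by (intro eq_matI) (simp_all add: sum.reindex_bij_betw[OF bij, of "\<lambda>a. \<rho> a $$ _"])
  qed
  finally show ?thesis unfolding key_state_def .
qed



theorem theorem1:
  fixes N N_PA d :: nat and A :: "bit mat" and \<rho> :: "bit vec \<Rightarrow> complex mat"
    and p :: "bit vec \<Rightarrow> real" and \<epsilon> :: real
  assumes "N_PA < N"
    and "A \<in> carrier_mat N_PA N"
    and "\<forall>y \<in> carrier_vec N_PA. transpose_mat A *\<^sub>v y = 0\<^sub>v N \<longrightarrow> y = 0\<^sub>v N_PA"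
    and "cq_state d (carrier_vec N) \<rho>"
    and "\<forall>m' \<in> carrier_vec N_PA. 0 \<le> p m'"
    and "(\<Sum>m' \<in> carrier_vec N_PA. p m') = 1"
    and "cq_trace_dist (carrier_vec N_PA) (key_state d N A \<rho>)
           (\<lambda>k. complex_of_real (1 / 2 ^ N_PA) \<cdot>\<^sub>m marg_E d (carrier_vec N) \<rho>) \<le> \<epsilon>"
  shows "cq_trace_dist (carrier_vec N_PA \<times> carrier_vec N) (msg_state d N A p \<rho>)
           (\<lambda>(m', s). complex_of_real (p m' / 2 ^ N) \<cdot>\<^sub>m marg_E d (carrier_vec N) \<rho>) \<le> \<epsilon>"
proof -
  note A = assms(2) and inj = assms(3)
  let ?P = "N_PA"
  let ?V = "\<lambda>n. carrier_vec n :: bit vec set"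
  define fc :: real where "fc = 2 ^ N / 2 ^ ?P"
  have fc_pos: "fc > 0" unfolding fc_def by simp
  have card_fc: "real (card (fiber N A k)) = fc" if "k \<in> ?V ?P" for k
    using fiber_card[OF A inj that] unfolding fc_def by (simp add: field_simps)
  have rho: "\<rho> x \<in> carrier_mat d d" if "x \<in> ?V N" for x
    using assms(4) that unfolding cq_state_def psd_def by auto
  define rE where "rE = marg_E d (?V N) \<rho>"
  have rE: "rE \<in> carrier_mat d d" unfolding rE_def marg_E_def by simp
  define g where "g = (\<lambda>k. trace_norm (key_state d N A \<rho> k - complex_of_real (1 / 2 ^ ?P) \<cdot>\<^sub>m rE))"
  define G where "G = (\<Sum>k\<in>?V ?P. g k)"
  have hyp: "G / 2 \<le> \<epsilon>" using assms(7) unfolding cq_trace_dist_def G_def g_def rE_def by simp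
  have K: "key_state d N A \<rho> k \<in> carrier_mat d d" for k unfolding key_state_def by simp
  have tm: "trace_norm (msg_state d N A p \<rho> (m', s) - complex_of_real (p m' / 2 ^ N) \<cdot>\<^sub>m rE)
      = (p m' / fc) * g (A *\<^sub>v s + m')" if m': "m' \<in> ?V ?P" and s: "s \<in> ?V N" for m' s
  proof -
    have e: "p m' / 2 ^ N = (p m' / fc) * (1 / 2 ^ ?P)" unfolding fc_def by simp
    have ms: "msg_state d N A p \<rho> (m', s) = complex_of_real (p m' / fc) \<cdot>\<^sub>m key_state d N A \<rho> (A *\<^sub>v s + m')"
      using msg_state_eq[OF A rho m' s] card_fc[OF m'] by simp
    have "msg_state d N A p \<rho> (m', s) - complex_of_real (p m' / 2 ^ N) \<cdot>\<^sub>m rE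
      = complex_of_real (p m' / fc) \<cdot>\<^sub>m key_state d N A \<rho> (A *\<^sub>v s + m')
        - (complex_of_real (p m' / fc) * complex_of_real (1 / 2 ^ ?P)) \<cdot>\<^sub>m rE"
      by (simp only: ms e of_real_mult)
    also have "\<dots> = complex_of_real (p m' / fc) \<cdot>\<^sub>m (key_state d N A \<rho> (A *\<^sub>v s + m') - complex_of_real (1 / 2 ^ ?P) \<cdot>\<^sub>m rE)"
      by (rule smult_diff_factor[OF K rE])
    finally have D: "msg_state d N A p \<rho> (m', s) - complex_of_real (p m' / 2 ^ N) \<cdot>\<^sub>m rE
      = complex_of_real (p m' / fc) \<cdot>\<^sub>m (key_state d N A \<rho> (A *\<^sub>v s + m') - complex_of_real (1 / 2 ^ ?P) \<cdot>\<^sub>m rE)" .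
    have c0: "p m' / fc \<ge> 0" using assms(5) m' fc_pos by simp
    have XC: "key_state d N A \<rho> (A *\<^sub>v s + m') - complex_of_real (1 / 2 ^ ?P) \<cdot>\<^sub>m rE \<in> carrier_mat d d"
      using rE by (intro minus_carrier_mat smult_carrier_mat)
    show ?thesis unfolding g_def D by (rule trace_norm_smult[OF XC c0])
  qed
  have inner: "(\<Sum>s\<in>?V N. g (A *\<^sub>v s + m')) = fc * G" if m': "m' \<in> ?V ?P" for m'
  proof -
    have "(\<Sum>s\<in>?V N. g (A *\<^sub>v s + m')) = (\<Sum>k\<in>?V ?P. \<Sum>s\<in>{s \<in> ?V N. A *\<^sub>v s = k}. g (A *\<^sub>v s + m'))"
      by (rule sum.group[symmetric]) (use A in auto)
    also have "\<dots> = (\<Sum>k\<in>?V ?P. fc * g (k + m'))"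
    proof (intro sum.cong refl)
      fix k assume k: "k \<in> ?V ?P"
      have "(\<Sum>s\<in>{s \<in> ?V N. A *\<^sub>v s = k}. g (A *\<^sub>v s + m')) = (\<Sum>s\<in>fiber N A k. g (k + m'))"
        unfolding fiber_def by (intro sum.cong refl) auto
      also have "\<dots> = fc * g (k + m')" using card_fc[OF k] by simp
      finally show "(\<Sum>s\<in>{s \<in> ?V N. A *\<^sub>v s = k}. g (A *\<^sub>v s + m')) = fc * g (k + m')" .
    qed
    also have "\<dots> = fc * (\<Sum>k\<in>?V ?P. g (k + m'))" by (simp add: sum_distrib_left)
    also have "(\<Sum>k\<in>?V ?P. g (k + m')) = G"
    proof -
      have bij: "bij_betw (\<lambda>k. k + m') (?V ?P) (?V ?P)"
        by (rule bij_betwI[of _ _ _ "\<lambda>k. k + m'"])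
          (use m' in \<open>auto simp: assoc_add_vec vec_add_self\<close>)
      show ?thesis unfolding G_def using sum.reindex_bij_betw[OF bij, of g] by simp
    qed
    finally show ?thesis .
  qed
  have "cq_trace_dist (?V ?P \<times> ?V N) (msg_state d N A p \<rho>)
           (\<lambda>(m', s). complex_of_real (p m' / 2 ^ N) \<cdot>\<^sub>m rE)
      = (1/2) * (\<Sum>m'\<in>?V ?P. \<Sum>s\<in>?V N. (p m' / fc) * g (A *\<^sub>v s + m'))"
  proof -
    have "(\<Sum>x\<in>?V ?P \<times> ?V N. trace_norm (msg_state d N A p \<rho> x -
        (case x of (m', s) \<Rightarrow> complex_of_real (p m' / 2 ^ N) \<cdot>\<^sub>m rE)))
      = (\<Sum>x\<in>?V ?P \<times> ?V N. (case x of (m', s) \<Rightarrow> (p m' / fc) * g (A *\<^sub>v s + m')))"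
    proof (intro sum.cong refl)
      fix x assume x: "x \<in> ?V ?P \<times> ?V N"
      then obtain m' s where xe: "x = (m', s)" and m': "m' \<in> ?V ?P" and s: "s \<in> ?V N" by auto
      show "trace_norm (msg_state d N A p \<rho> x -
        (case x of (m', s) \<Rightarrow> complex_of_real (p m' / 2 ^ N) \<cdot>\<^sub>m rE))
        = (case x of (m', s) \<Rightarrow> (p m' / fc) * g (A *\<^sub>v s + m'))"
        unfolding xe prod.case by (rule tm[OF m' s])
    qed
    also have "\<dots> = (\<Sum>m'\<in>?V ?P. \<Sum>s\<in>?V N. (p m' / fc) * g (A *\<^sub>v s + m'))"
      by (simp add: sum.cartesian_product)
    finally show ?thesis unfolding cq_trace_dist_def by simp
  qed
  also have "\<dots> = (1/2) * (\<Sum>m'\<in>?V ?P. p m' * G)"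
  proof -
    have "(\<Sum>m'\<in>?V ?P. \<Sum>s\<in>?V N. (p m' / fc) * g (A *\<^sub>v s + m')) = (\<Sum>m'\<in>?V ?P. p m' * G)"
    proof (intro sum.cong refl)
      fix m' assume m': "m' \<in> ?V ?P"
      have "(\<Sum>s\<in>?V N. (p m' / fc) * g (A *\<^sub>v s + m')) = (p m' / fc) * (\<Sum>s\<in>?V N. g (A *\<^sub>v s + m'))"
        by (simp add: sum_distrib_left)
      also have "\<dots> = p m' * G" unfolding inner[OF m'] using fc_pos by simp
      finally show "(\<Sum>s\<in>?V N. (p m' / fc) * g (A *\<^sub>v s + m')) = p m' * G" .
    qed
    then show ?thesis by simp
  qed
  also have "\<dots> = G / 2" using assms(6) by (simp add: sum_distrib_right[symmetric])
  finally show ?thesis using hyp unfolding rE_def by simp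
qed


end
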